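(* Let $\boldsymbol{\tau} \colon \mathsf{BPT} \to \mathbb K$ be a weighted troupe. For $n \geq 1$, let \[\omega_n = \sum_{T \in \mathsf{Branch}_n} \boldsymbol{\tau}(T)\quad\text{and}\quad\check{\omega}_n = \sum_{T \in \mathsf{BPT}_n} \boldsymbol{\tau}(T).\] Let \[\mathscr B(t) = \sum_{n \geq 1} \omega_n t^n\quad\text{and}\quad \mathscr T(t) = \sum_{n \geq 1} \check{\omega}_n t^n.\] Then $\mathscr B(t)$ is algebraic over $\mathbb K[t]$ if and only if $\mathscr T(t)$ is.
   Context: $\mathbb K$ is a commutative ring. $\mathsf{BPT}$ is the set of binary plane trees (rooted trees where each child is designated left or right, each vertex having at most one left and one right child), including the empty tree $\varnothing$; $\mathsf{BPT}_n$ is the set of those with $n$ vertices. A branch is a nonempty binary plane tree in which every vertex has at most one child; $\mathsf{Branch}_n$ is the set of branches with $n$ vertices. For nonempty binary plane trees $T_1,T_2$ and a vertex $v$ of $T_1$, the insertion $\nabla_v(T_1,T_2)$ is obtained by extending $v$ into a left edge (identifying $v$ with the bottom vertex and calling the new upper vertex $v^*$) and attaching $T_2$ as the right subtree of $v^*$. A weighted troupe is a function $\boldsymbol{\tau}\colon\mathsf{BPT}\to\mathbb K$ with $\boldsymbol{\tau}(\varnothing)=0$ and $\boldsymbol{\tau}(\nabla_v(T_1,T_2))=\boldsymbol{\tau}(T_1)\boldsymbol{\tau}(T_2)$ for all $T_1,T_2$ and all vertices $v\in T_1$. It is known (previous theorem) that $\mathscr T(t) = \mathscr B\left(\frac{t}{1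 - t\mathscr T(t)}\right)$. *)

theory Defs
  imports "HOL-Computational_Algebra.Polynomial_FPS"
begin

text \<open>Binary plane trees: Leaf is the empty tree, Node L R is a vertex whose left
  subtree is L and right subtree is R (an empty subtree means no child).\<close>
datatype bpt = Leaf | Node bpt bpt

fun nverts :: "bpt \<Rightarrow> nat" where
  "nverts Leaf = 0"
| "nverts (Node L R) = Suc (nverts L + nverts R)"

fun is_branch :: "bpt \<Rightarrow> bool" where
  "is_branch Leaf = False"
| "is_branch (Node Leaf Leaf) = True"
| "is_branch (Node L Leaf) = is_branch L"
| "is_branch (Node Leaf R) = is_branch R"
| "is_branch (Node L R) = False"

text \<open>insertion T1 T2 T  iff  T = nabla_v(T1,T2) for some vertex v of T1:
  the vertex v (with subtrees L, R) is replaced by a new vertex v* whose left child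
  is v (keeping L, R) and whose right subtree is T2.\<close>
inductive insertion :: "bpt \<Rightarrow> bpt \<Rightarrow> bpt \<Rightarrow> bool" where
  here: "insertion (Node L R) T2 (Node (Node L R) T2)"
| left: "insertion L T2 L' \<Longrightarrow> insertion (Node L R) T2 (Node L' R)"
| right: "insertion R T2 R' \<Longrightarrow> insertion (Node L R) T2 (Node L R')"

definition weighted_troupe :: "(bpt \<Rightarrow> 'a::comm_ring_1) \<Rightarrow> bool" where
  "weighted_troupe \<tau> \<longleftrightarrow> \<tau> Leaf = 0 \<and>
     (\<forall>T1 T2 T. T1 \<noteq> Leaf \<longrightarrow> T2 \<noteq> Leaf \<longrightarrow> insertion T1 T2 T \<longrightarrow> \<tau> T = \<tau> T1 * \<tau> T2)"

definition branch_gf :: "(bpt \<Rightarrow> 'a::comm_ring_1) \<Rightarrow> 'a fps" where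
  "branch_gf \<tau> = Abs_fps (\<lambda>n. if n = 0 then 0 else (\<Sum>T\<in>{T. is_branch T \<and> nverts T = n}. \<tau> T))"

definition tree_gf :: "(bpt \<Rightarrow> 'a::comm_ring_1) \<Rightarrow> 'a fps" where
  "tree_gf \<tau> = Abs_fps (\<lambda>n. if n = 0 then 0 else (\<Sum>T\<in>{T. nverts T = n}. \<tau> T))"

definition fps_algebraic :: "'a::comm_ring_1 fps \<Rightarrow> bool" where
  "fps_algebraic F \<longleftrightarrow> (\<exists>p :: 'a poly poly. p \<noteq> 0 \<and> poly (map_poly fps_of_poly p) F = 0)"

end

theory Submission
  imports Defs
begin

lemma my_product_composition_lemma:
  assumes c0: "fps_nth c 0 = (0::'a::comm_ring_1)"
    and d0: "fps_nth d 0 = 0"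
  shows "fps_nth ((a oo c) * (b oo d)) n =
    sum (\<lambda>(k,m). fps_nth a k * fps_nth b m * fps_nth (c^k * d^m) n) {(k,m). k + m \<le> n}"  (is "?l = ?r")
proof -
  let ?S = "{(k::nat, m::nat). k + m \<le> n}"
  have s: "?S \<subseteq> {0..n} \<times> {0..n}" by (simp add: subset_eq)
  have f: "finite {(k::nat, m::nat). k + m \<le> n}"
    by (auto intro: finite_subset[OF s])
  have "?r = (\<Sum>(k, m) \<in> {(k, m). k + m \<le> n}. \<Sum>j = 0..n. fps_nth a k * fps_nth b m * (fps_nth (c ^ k) j * fps_nth (d ^ m) (n - j)))"
    by (simp add: fps_mult_nth sum_distrib_left)
  also have "\<dots> = (\<Sum>i = 0..n. \<Sum>(k,m)\<in>{(k,m). k+m \<le> n}. fps_nth a k * fps_nth (c ^ k) i * fps_nth b m * fps_nth (d ^ m) (n-i))"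
    unfolding sum.swap [where A = "{0..n}"] by (auto simp add: field_simps intro: sum.cong)
  also have "... = (\<Sum>i = 0..n.
                    \<Sum>q = 0..i. \<Sum>j = 0..n - i. fps_nth a q * fps_nth (c ^ q) i * (fps_nth b j * fps_nth (d ^ j) (n - i)))"
    apply (rule sum.cong [OF refl])
    apply (simp add: sum.cartesian_product mult.assoc)
    apply (rule sum.mono_neutral_right[OF f], force)
    by (clarsimp; metis c0 d0 leI startsby_zero_power_prefix mult_zero_left mult_zero_right)
  also have "\<dots> = ?l"
    by (simp add: fps_mult_nth fps_compose_nth sum_product)
  finally show ?thesis by simp
qed

lemma my_compose_mult_distrib:
  assumes c0: "fps_nth c 0 = (0::'a::comm_ring_1)"
  shows "(a * b) oo c = (a oo c) * (b oo c)"
proof (clarsimp simp add: fps_eq_iff)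
  fix n
  have "fps_nth ((a oo c) * (b oo c)) n = sum (\<lambda>s. sum (\<lambda>i. fps_nth a i * fps_nth b (s - i) * fps_nth (c^s) n) {0..s}) {0..n}"
    unfolding my_product_composition_lemma[OF c0 c0] power_add[symmetric]
    unfolding sum_pair_less_iff[where a = "\<lambda>k. fps_nth a k" and b="\<lambda>m. fps_nth b m" and c="\<lambda>s. fps_nth (c ^ s) n" and n = n] ..
  moreover have "fps_nth (a * b oo c) n = (\<Sum>s = 0..n. \<Sum>i = 0..s. fps_nth a i * fps_nth b (s - i) * fps_nth (c ^ s) n)"
    by (simp add: fps_compose_nth fps_mult_nth sum_distrib_right)
  ultimately show "fps_nth (a * b oo c) n = fps_nth ((a oo c) * (b oo c)) n" by simp
qed

lemma my_compose_power:
  assumes c0: "fps_nth c 0 = (0::'a::comm_ring_1)"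
  shows "(a oo c)^n = a^n oo c"
  by (induction n) (simp_all add: my_compose_mult_distrib[OF c0])

lemma my_X_power_compose:
  assumes c0: "fps_nth c 0 = (0::'a::comm_ring_1)"
  shows "fps_X^k oo c = c^k"
  using my_compose_power[OF c0, of fps_X k] c0 by simp

lemma my_compose_assoc:
  assumes c0: "fps_nth c 0 = (0::'a::comm_ring_1)"
    and b0: "fps_nth b 0 = 0"
  shows "a oo (b oo c) = a oo b oo c" (is "?l = ?r")
proof -
  have "fps_nth ?l n = fps_nth ?r n" for n
  proof -
    have "fps_nth ?l n = fps_nth (sum (\<lambda>i. (fps_const (fps_nth a i) * b^i) oo c) {0..n}) n"
      by (simp add: fps_compose_nth my_compose_power[OF c0] my_compose_mult_distrib[OF c0]
        sum_distrib_left mult.assoc fps_sum_nth)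
    also have "\<dots> = fps_nth ((sum (\<lambda>i. fps_const (fps_nth a i) * b^i) {0..n}) oo c) n"
      by (simp add: fps_compose_sum_distrib)
    also have "... = (\<Sum>i = 0..n. \<Sum>j = 0..n. fps_nth a j * (fps_nth (b ^ j) i * fps_nth (c ^ i) n))"
      by (simp add: fps_compose_nth fps_sum_nth sum_distrib_right mult.assoc)
    also have "... = (\<Sum>i = 0..n. \<Sum>j = 0..i. fps_nth a j * (fps_nth (b ^ j) i * fps_nth (c ^ i) n))"
      by (intro sum.cong [OF refl] sum.mono_neutral_right; simp add: b0 startsby_zero_power_prefix)
    also have "\<dots> = fps_nth ?r n"
      by (simp add: fps_compose_nth  sum_distrib_right mult.assoc)
    finally show ?thesis .
  qed
  then show ?thesis
    by (simp add: fps_eq_iff)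
qed


fun sp :: "bpt \<Rightarrow> bpt" where
  "sp Leaf = Leaf"
| "sp (Node L R) = (if L \<noteq> Leaf \<and> R \<noteq> Leaf then sp L else Node (sp L) (sp R))"

fun cw :: "(bpt \<Rightarrow> 'a::comm_ring_1) \<Rightarrow> bpt \<Rightarrow> 'a" where
  "cw t Leaf = 1"
| "cw t (Node L R) = (if L \<noteq> Leaf \<and> R \<noteq> Leaf then cw t L * t R else cw t L * cw t R)"

datatype ctx = Hole | CL ctx bpt | CR bpt ctx

fun fill :: "ctx \<Rightarrow> bpt \<Rightarrow> bpt" where
  "fill Hole X = X"
| "fill (CL C R) X = fill C (Node X R)"
| "fill (CR L C) X = fill C (Node L X)"

lemma ins_fill_gen: "insertion X R Y \<Longrightarrow> insertion (fill C X) R (fill C Y)"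
  by (induction C arbitrary: X Y) (auto intro: insertion.left insertion.right)

lemma ins_fill: "A \<noteq> Leaf \<Longrightarrow> insertion (fill C A) R (fill C (Node A R))"
proof -
  assume "A \<noteq> Leaf"
  then obtain a b where "A = Node a b" by (cases A) auto
  then show ?thesis by (auto intro: ins_fill_gen insertion.here)
qed

lemma fill_ne: "A \<noteq> Leaf \<Longrightarrow> fill C A \<noteq> Leaf"
  by (induction C arbitrary: A) auto

lemma tau_fill:
  assumes wt: "weighted_troupe t"
  shows "t (fill C T) = t (fill C (sp T)) * cw t T"
proof (induction T arbitrary: C)
  case Leaf
  then show ?case by simp
next
  case (Node L R)
  show ?case
  proof (cases "L \<noteq> Leaf \<and> R \<noteq> Leaf")
    case True
    have "t (fill C (Node L R)) = t (fill C L) * t R"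
      using wt ins_fill[of L C R] True fill_ne[of L C] unfolding weighted_troupe_def by blast
    also have "\<dots> = t (fill C (sp L)) * cw t L * t R" using Node.IH(1)[of C] by simp
    finally show ?thesis using True by (simp add: mult.assoc)
  next
    case False
    have "t (fill C (Node L R)) = t (fill (CL C R) L)" by simp
    also have "\<dots> = t (fill (CL C R) (sp L)) * cw t L" by (rule Node.IH(1))
    also have "t (fill (CL C R) (sp L)) = t (fill (CR (sp L) C) R)" by simp
    also have "\<dots> = t (fill (CR (sp L) C) (sp R)) * cw t R" by (rule Node.IH(2))
    finally show ?thesis using False by (auto simp: mult_ac)
  qed
qed

lemma tau_sp:
  assumes wt: "weighted_troupe t"
  shows "t T = t (sp T) * cw t T"
  using tau_fill[OF wt, of Hole T] by simp

lemma sp_Leaf_iff[simp]: "sp T = Leaf \<longleftrightarrow> T = Leaf"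
  by (induction T) auto

lemma is_branch_Node:
  "is_branch (Node L R) \<longleftrightarrow> (L = Leaf \<and> R = Leaf) \<or> (R = Leaf \<and> is_branch L) \<or> (L = Leaf \<and> is_branch R)"
  by (cases L; cases R) auto

lemma is_branch_ne: "is_branch T \<Longrightarrow> T \<noteq> Leaf"
  by auto

lemma sp_branch: "T \<noteq> Leaf \<Longrightarrow> is_branch (sp T)"
  by (induction T) (auto simp: is_branch_Node)

lemma sp_size: "nverts (sp T) \<le> nverts T"
  by (induction T) auto

definition trees :: "nat \<Rightarrow> bpt set" where "trees n = {T. nverts T = n}"

lemma trees_0: "trees 0 = {Leaf}"
  unfolding trees_def by (auto elim: nverts.elims)

lemma trees_Suc: "trees (Suc n) = (\<lambda>(i,(L,R)). Node L R) ` (SIGMA i:{..n}. trees i \<times> trees (n - i))"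
proof (rule set_eqI, rule iffI)
  fix T assume "T \<in> trees (Suc n)"
  then obtain L R where T: "T = Node L R" "nverts L + nverts R = n"
    unfolding trees_def by (cases T) auto
  then show "T \<in> (\<lambda>(i,(L,R)). Node L R) ` (SIGMA i:{..n}. trees i \<times> trees (n - i))"
    unfolding trees_def
    by (intro image_eqI[where x="(nverts L, (L, R))"]) auto
qed (auto simp: trees_def)

lemma finite_trees: "finite (trees n)"
proof (induction n rule: less_induct)
  case (less n)
  show ?case
  proof (cases n)
    case 0 then show ?thesis by (simp add: trees_0)
  next
    case (Suc m)
    have "finite (SIGMA i:{..m}. trees i \<times> trees (m - i))"
      using less Suc by (intro finite_SigmaI finite_cartesian_product) auto
    then show ?thesis unfolding Suc trees_Suc by simp
  qed
qed

lemma sum_trees_Suc: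
  "(\<Sum>T\<in>trees (Suc n). f T) = (\<Sum>i\<le>n. \<Sum>L\<in>trees i. \<Sum>R\<in>trees (n - i). f (Node L R))"
proof -
  have inj: "inj_on (\<lambda>(i,(L,R)). Node L R) (SIGMA i:{..n}. trees i \<times> trees (n - i))"
    by (auto simp: inj_on_def trees_def)
  have "(\<Sum>T\<in>trees (Suc n). f T) = (\<Sum>x\<in>(SIGMA i:{..n}. trees i \<times> trees (n - i)). f ((\<lambda>(i,(L,R)). Node L R) x))"
    unfolding trees_Suc by (rule sum.reindex[OF inj, unfolded comp_def])
  also have "\<dots> = (\<Sum>(i,LR)\<in>(SIGMA i:{..n}. trees i \<times> trees (n - i)). f ((\<lambda>(L,R). Node L R) LR))"
    by (rule sum.cong) auto
  also have "\<dots> = (\<Sum>i\<le>n. \<Sum>LR\<in>trees i \<times> trees (n - i). f ((\<lambda>(L,R). Node L R) LR))"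
    by (rule sum.Sigma[symmetric]) (auto simp: finite_trees)
  also have "\<dots> = (\<Sum>i\<le>n. \<Sum>L\<in>trees i. \<Sum>R\<in>trees (n - i). f (Node L R))"
    by (intro sum.cong refl) (simp add: sum.cartesian_product case_prod_unfold)
  finally show ?thesis .
qed


definition tc :: "(bpt \<Rightarrow> 'a::comm_ring_1) \<Rightarrow> nat \<Rightarrow> 'a" where
  "tc t n = (\<Sum>T\<in>trees n. t T)"
definition gc :: "(bpt \<Rightarrow> 'a::comm_ring_1) \<Rightarrow> bpt \<Rightarrow> nat \<Rightarrow> 'a" where
  "gc t b n = (\<Sum>T\<in>trees n. if sp T = b then cw t T else 0)"
definition Gf :: "(bpt \<Rightarrow> 'a::comm_ring_1) \<Rightarrow> bpt \<Rightarrow> 'a fps" where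
  "Gf t b = Abs_fps (gc t b)"

lemma tree_gf_eq: "t Leaf = 0 \<Longrightarrow> tree_gf t = Abs_fps (tc t)"
  unfolding tree_gf_def tc_def
  by (intro fps_ext) (auto simp: trees_0 trees_def[symmetric])

lemma Gf_Leaf: "Gf t Leaf = 1"
proof (rule fps_ext)
  fix n show "fps_nth (Gf t Leaf) n = fps_nth 1 n"
  proof (cases n)
    case 0 then show ?thesis by (simp add: Gf_def gc_def trees_0)
  next
    case (Suc m)
    have "gc t Leaf n = 0" unfolding gc_def
      by (rule sum.neutral) (auto simp: Suc trees_def)
    then show ?thesis by (simp add: Gf_def Suc)
  qed
qed

lemma pointwise:
  assumes t0: "t Leaf = 0" and br: "is_branch (Node ba bb)"
  shows "(if sp (Node L R) = Node ba bb then cw t (Node L R) else 0) =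
    (if sp L = Node ba bb then cw t L else 0) * t R +
    (if sp L = ba then cw t L else 0) * (if sp R = bb then cw t R else 0)"
proof (cases "L \<noteq> Leaf \<and> R \<noteq> Leaf")
  case True
  then have "\<not> (sp L = ba \<and> sp R = bb)" using br by (auto simp: is_branch_Node)
  then show ?thesis using True by auto
next
  case False
  then show ?thesis using t0 by auto
qed

lemma Gf_rec:
  assumes t0: "t Leaf = 0" and br: "is_branch (Node ba bb)"
  shows "Gf t (Node ba bb) = fps_X * (Gf t (Node ba bb) * Abs_fps (tc t) + Gf t ba * Gf t bb)"
proof (rule fps_ext)
  fix n
  show "fps_nth (Gf t (Node ba bb)) n = fps_nth (fps_X * (Gf t (Node ba bb) * Abs_fps (tc t) + Gf t ba * Gf t bb)) n"
  proof (cases n)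
    case 0 then show ?thesis by (simp add: Gf_def gc_def trees_0)
  next
    case (Suc m)
    let ?b = "Node ba bb"
    have "gc t ?b (Suc m) = (\<Sum>i\<le>m. \<Sum>L\<in>trees i. \<Sum>R\<in>trees (m - i).
       (if sp L = ?b then cw t L else 0) * t R +
       (if sp L = ba then cw t L else 0) * (if sp R = bb then cw t R else 0))"
      unfolding gc_def sum_trees_Suc pointwise[where t=t and ba=ba and bb=bb, OF t0 br] ..
    also have "\<dots> = (\<Sum>i\<le>m. gc t ?b i * tc t (m - i)) + (\<Sum>i\<le>m. gc t ba i * gc t bb (m - i))"
      by (simp add: sum.distrib gc_def tc_def sum_product)
    also have "\<dots> = fps_nth (Gf t (Node ba bb) * Abs_fps (tc t) + Gf t ba * Gf t bb) m"
      by (simp add: fps_mult_nth Gf_def atLeast0AtMost)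
    finally show ?thesis by (simp add: Suc Gf_def)
  qed
qed

lemma cancel_unit:
  fixes U a b :: "'a::comm_ring_1 fps"
  assumes "fps_nth U 0 = 1" "a * U = b * U"
  shows "a = b"
proof -
  have inv: "U * fps_right_inverse U 1 = 1" by (rule fps_right_inverse) (simp add: assms)
  have "a = a * U * fps_right_inverse U 1" by (simp add: inv mult.assoc)
  also have "\<dots> = b * U * fps_right_inverse U 1" using assms by simp
  also have "\<dots> = b" by (simp add: inv mult.assoc)
  finally show ?thesis .
qed

lemma Gf_pow:
  assumes t0: "t Leaf = 0" and w: "w * (1 - fps_X * Abs_fps (tc t)) = fps_X"
  shows "b = Leaf \<or> is_branch b \<Longrightarrow> Gf t b = w ^ nverts b"
proof (induction b)
  case Leaf
  then show ?case by (simp add: Gf_Leaf)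
next
  case (Node ba bb)
  let ?U = "1 - fps_X * Abs_fps (tc t)"
  have br: "is_branch (Node ba bb)" using Node.prems by simp
  then have h1: "Gf t ba = w ^ nverts ba" "Gf t bb = w ^ nverts bb"
    using Node.IH by (auto simp: is_branch_Node)
  have "Gf t (Node ba bb) * ?U = fps_X * (Gf t ba * Gf t bb)"
    using Gf_rec[where t=t and ba=ba and bb=bb, OF t0 br] by (simp add: algebra_simps)
  also have "\<dots> = (w * ?U) * (w ^ nverts ba * w ^ nverts bb)"
    using w by (simp add: h1)
  also have "\<dots> = w ^ nverts (Node ba bb) * ?U"
    by (simp add: power_add mult_ac)
  finally show ?case by (rule cancel_unit[rotated]) simp
qed


definition br :: "nat \<Rightarrow> bpt set" where "br m = {T. is_branch T \<and> nverts T = m}"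

lemma finite_br: "finite (br m)"
  by (rule finite_subset[OF _ finite_trees[of m]]) (auto simp: br_def trees_def)

lemma nverts_pos: "T \<noteq> Leaf \<Longrightarrow> 0 < nverts T"
  by (cases T) auto

lemma branch_gf_nth: "fps_nth (branch_gf t) m = (\<Sum>b\<in>br m. t b)"
proof (cases "m = 0")
  case True
  have "br m = {}" using True by (auto simp: br_def dest!: is_branch_ne nverts_pos)
  then show ?thesis using True by (simp add: branch_gf_def)
qed (simp add: branch_gf_def br_def)

lemma per_tree:
  assumes "T \<in> trees n"
  shows "(\<Sum>m=0..n. if sp T \<in> br m then c else 0) = (if T \<noteq> Leaf then c else 0)"
proof (cases "T = Leaf")
  case True
  then show ?thesis by (simp add: br_def)
next
  case False
  then have "\<And>m. (sp T \<in> br m) = (nverts (sp T) = m)"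
    using sp_branch by (auto simp: br_def)
  moreover have "nverts (sp T) \<le> n" using sp_size[of T] assms by (simp add: trees_def)
  ultimately show ?thesis using False by simp
qed

lemma T_eq:
  assumes wt: "weighted_troupe t" and w: "w * (1 - fps_X * Abs_fps (tc t)) = fps_X"
  shows "tree_gf t = branch_gf t oo w"
proof (rule fps_ext)
  fix n
  have t0: "t Leaf = 0" using wt by (simp add: weighted_troupe_def)
  have "fps_nth (branch_gf t oo w) n = (\<Sum>m=0..n. \<Sum>b\<in>br m. t b * fps_nth (w ^ m) n)"
    by (simp add: fps_compose_nth branch_gf_nth sum_distrib_right)
  also have "\<dots> = (\<Sum>m=0..n. \<Sum>b\<in>br m. t b * gc t b n)"
  proof (intro sum.cong refl)
    fix m b assume "b \<in> br m"
    then have "Gf t b = w ^ m" using Gf_pow[where t=t and w=w and b=b, OF t0 w] by (auto simp: br_def)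
    then show "t b * fps_nth (w ^ m) n = t b * gc t b n" by (metis Gf_def fps_nth_Abs_fps)
  qed
  also have "\<dots> = (\<Sum>m=0..n. \<Sum>b\<in>br m. \<Sum>T\<in>trees n. if sp T = b then t b * cw t T else 0)"
    by (simp add: gc_def sum_distrib_left if_distrib cong: if_cong)
  also have "\<dots> = (\<Sum>T\<in>trees n. \<Sum>m=0..n. \<Sum>b\<in>br m. if sp T = b then t b * cw t T else 0)"
    by (subst sum.swap) (subst (2) sum.swap, rule refl)
  also have "\<dots> = (\<Sum>T\<in>trees n. \<Sum>m=0..n. if sp T \<in> br m then t (sp T) * cw t T else 0)"
    by (simp add: finite_br)
  also have "\<dots> = (\<Sum>T\<in>trees n. if T \<noteq> Leaf then t (sp T) * cw t T else 0)"
    by (intro sum.cong refl per_tree)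
  also have "\<dots> = (\<Sum>T\<in>trees n. t T)"
    by (intro sum.cong refl) (auto simp: t0 tau_sp[OF wt, symmetric])
  finally show "fps_nth (tree_gf t) n = fps_nth (branch_gf t oo w) n"
    by (simp add: tree_gf_eq[where t=t, OF t0] tc_def)
qed


abbreviation mpf :: "'a::comm_ring_1 poly poly \<Rightarrow> 'a fps poly" where
  "mpf \<equiv> map_poly fps_of_poly"

lemma mp_add: "mpf (p + q) = mpf p + mpf q"
  by (rule poly_eqI) (simp add: coeff_map_poly fps_of_poly_add)

lemma mp_mult: "mpf (p * q) = mpf p * mpf q"
  by (rule poly_eqI) (simp add: coeff_map_poly coeff_mult fps_of_poly_sum fps_of_poly_mult)

lemma mp_one: "mpf 1 = 1"
  by (rule poly_eqI) (simp add: coeff_map_poly coeff_1)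

lemma mp_power: "mpf (p ^ n) = mpf p ^ n"
  by (induction n) (simp_all add: mp_one mp_mult)

lemma mp_sum: "mpf (\<Sum>x\<in>A. f x) = (\<Sum>x\<in>A. mpf (f x))"
  by (induction A rule: infinite_finite_induct) (simp_all add: mp_add)

lemma poly_sum_upto:
  fixes p :: "'b::comm_semiring_1 poly"
  assumes "degree p \<le> N"
  shows "poly p x = (\<Sum>i\<le>N. coeff p i * x ^ i)"
proof -
  have "poly p x = poly (\<Sum>i\<le>N. monom (coeff p i) i) x" using poly_as_sum_of_monoms'[OF assms] by simp
  also have "\<dots> = (\<Sum>i\<le>N. coeff p i * x ^ i)" by (simp add: poly_sum poly_monom)
  finally show ?thesis .
qed

lemma fps_of_poly_upto:
  fixes q :: "'a::comm_ring_1 poly"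
  assumes "degree q \<le> N"
  shows "fps_of_poly q = (\<Sum>k\<le>N. fps_const (coeff q k) * fps_X ^ k)"
proof -
  have "fps_of_poly q = fps_of_poly (\<Sum>k\<le>N. monom (coeff q k) k)" using poly_as_sum_of_monoms'[OF assms] by simp
  also have "\<dots> = (\<Sum>k\<le>N. fps_const (coeff q k) * fps_X ^ k)" by (simp add: fps_of_poly_sum fps_of_poly_monom)
  finally show ?thesis .
qed

lemma transfer_alg:
  fixes F G w :: "'a::comm_ring_1 fps"
  assumes alg: "fps_algebraic F" and w0: "fps_nth w 0 = 0" and G: "G = F oo w"
    and wU: "w * (1 + fps_const c * fps_X * G) = fps_X"
  shows "fps_algebraic G"
proof -
  obtain P :: "'a poly poly" where P0: "P \<noteq> 0" and PF: "poly (mpf P) F = 0"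
    using alg unfolding fps_algebraic_def by blast
  define d where "d = degree P"
  define D where "D = (\<Sum>i\<le>d. degree (coeff P i))"
  define p where "p i k = coeff (coeff P i) k" for i k
  define U where "U = 1 + fps_const c * fps_X * G"
  define Q :: "'a poly poly" where "Q = [:1, [:0, c:]:]"
  have degD: "degree (coeff P i) \<le> D" if "i \<le> d" for i
    unfolding D_def using that by (intro member_le_sum) auto
  have expand: "fps_of_poly (coeff P i) = (\<Sum>k\<le>D. fps_const (p i k) * fps_X ^ k)" if "i \<le> d" for i
    unfolding p_def by (rule fps_of_poly_upto[OF degD[OF that]])
  have "poly (mpf P) F = (\<Sum>i\<le>d. coeff (mpf P) i * F ^ i)"
    by (rule poly_sum_upto, rule degree_le) (simp add: coeff_map_poly d_def coeff_eq_0)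
  also have "\<dots> = (\<Sum>i\<le>d. (\<Sum>k\<le>D. fps_const (p i k) * fps_X ^ k) * F ^ i)"
    by (intro sum.cong refl) (simp add: coeff_map_poly expand)
  finally have H0: "(\<Sum>i\<le>d. (\<Sum>k\<le>D. fps_const (p i k) * fps_X ^ k) * F ^ i) = 0" using PF by simp
  have "0 = (\<Sum>i\<le>d. (\<Sum>k\<le>D. fps_const (p i k) * fps_X ^ k) * F ^ i) oo w"
    using H0 by simp
  also have "\<dots> = (\<Sum>i\<le>d. (\<Sum>k\<le>D. fps_const (p i k) * w ^ k) * G ^ i)"
    by (simp add: fps_compose_sum_distrib my_compose_mult_distrib[OF w0] my_X_power_compose[OF w0]
        my_compose_power[OF w0] G)
  finally have H1: "(\<Sum>i\<le>d. (\<Sum>k\<le>D. fps_const (p i k) * w ^ k) * G ^ i) = 0" by simp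
  have H2: "(\<Sum>i\<le>d. \<Sum>k\<le>D. fps_const (p i k) * fps_X ^ k * U ^ (D - k) * G ^ i) = 0"
  proof -
    have "(\<Sum>i\<le>d. \<Sum>k\<le>D. fps_const (p i k) * fps_X ^ k * U ^ (D - k) * G ^ i)
        = U ^ D * (\<Sum>i\<le>d. (\<Sum>k\<le>D. fps_const (p i k) * w ^ k) * G ^ i)"
    proof -
      have that': "fps_X ^ k * U ^ (D - k) = U ^ D * w ^ k" if "k \<le> D" for k
      proof -
        have "U ^ D = U ^ k * U ^ (D - k)" using that by (simp add: power_add[symmetric])
        then have "U ^ D * w ^ k = (w * U) ^ k * U ^ (D - k)" by (simp add: power_mult_distrib mult_ac)
        then show ?thesis using wU by (simp add: U_def)
      qed
      have "(\<Sum>i\<le>d. \<Sum>k\<le>D. fps_const (p i k) * fps_X ^ k * U ^ (D - k) * G ^ i)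
          = (\<Sum>i\<le>d. \<Sum>k\<le>D. U ^ D * (fps_const (p i k) * w ^ k * G ^ i))"
      proof (intro sum.cong refl)
        fix i k assume "k \<in> {..D}"
        then have e: "fps_X ^ k * U ^ (D - k) = U ^ D * w ^ k" using that' by simp
        have "fps_const (p i k) * fps_X ^ k * U ^ (D - k) * G ^ i =
              fps_const (p i k) * (fps_X ^ k * U ^ (D - k)) * G ^ i" by (simp add: mult.assoc)
        also have "\<dots> = U ^ D * (fps_const (p i k) * w ^ k * G ^ i)" unfolding e by (simp add: mult_ac)
        finally show "fps_const (p i k) * fps_X ^ k * U ^ (D - k) * G ^ i = U ^ D * (fps_const (p i k) * w ^ k * G ^ i)" .
      qed
      then show ?thesis
        by (simp add: sum_distrib_left sum_distrib_right mult.assoc)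
    qed
    then show ?thesis using H1 by simp
  qed
  define R where "R = (\<Sum>i\<le>d. \<Sum>k\<le>D. monom (monom (p i k) k) i * Q ^ (D - k))"
  have EQ: "poly (mpf Q) G = U"
    by (simp add: Q_def U_def map_poly_pCons fps_of_poly_pCons mult_ac)
  have "poly (mpf R) G = (\<Sum>i\<le>d. \<Sum>k\<le>D. fps_of_poly (monom (p i k) k) * G ^ i * U ^ (D - k))"
    by (simp add: R_def mp_sum mp_mult mp_power poly_sum map_poly_monom poly_monom EQ)
  also have "\<dots> = 0"
    using H2 by (simp add: fps_of_poly_monom mult_ac)
  finally have RG: "poly (mpf R) G = 0" .
  define i0 where "i0 = (LEAST i. coeff P i \<noteq> 0)"
  have ex: "\<exists>i. coeff P i \<noteq> 0" using P0 by (metis leading_coeff_neq_0)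
  have i0nz: "coeff P i0 \<noteq> 0" unfolding i0_def using ex by (rule LeastI_ex)
  have below: "coeff P i = 0" if "i < i0" for i
    using that not_less_Least unfolding i0_def by blast
  have i0d: "i0 \<le> d" unfolding d_def using i0nz le_degree by blast
  have "coeff R i0 = (\<Sum>i\<le>d. \<Sum>k\<le>D. if i0 < i then 0 else monom (p i k) k * coeff (Q ^ (D - k)) (i0 - i))"
    by (simp add: R_def coeff_sum coeff_monom_mult)
  also have "\<dots> = (\<Sum>i\<le>d. if i = i0 then (\<Sum>k\<le>D. monom (p i k) k) else 0)"
  proof (intro sum.cong refl)
    fix i assume "i \<in> {..d}"
    show "(\<Sum>k\<le>D. if i0 < i then 0 else monom (p i k) k * coeff (Q ^ (D - k)) (i0 - i)) =
      (if i = i0 then (\<Sum>k\<le>D. monom (p i k) k) else 0)"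
    proof (cases "i = i0")
      case True
      then show ?thesis by (simp add: coeff_0_power Q_def)
    next
      case False
      then show ?thesis
        by (cases "i0 < i") (auto simp: p_def below intro!: sum.neutral)
    qed
  qed
  also have "\<dots> = (\<Sum>k\<le>D. monom (p i0 k) k)" using i0d by simp
  also have "\<dots> = coeff P i0"
    unfolding p_def by (rule poly_as_sum_of_monoms'[OF degD[OF i0d]])
  finally have "coeff R i0 \<noteq> 0" using i0nz by simp
  then have "R \<noteq> 0" by auto
  then show ?thesis unfolding fps_algebraic_def using RG by blast
qed


definition agree :: "nat \<Rightarrow> 'a::comm_ring_1 fps \<Rightarrow> 'a fps \<Rightarrow> bool" where
  "agree n a b \<longleftrightarrow> (\<forall>j<n. fps_nth a j = fps_nth b j)"

lemma agree_mult: "agree n a b \<Longrightarrow> agree n c d \<Longrightarrow> agree n (a * c) (b * d)"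
  unfolding agree_def fps_mult_nth by (auto intro!: sum.cong)

lemma agree_power: "agree n a b \<Longrightarrow> agree n (a ^ k) (b ^ k)"
  by (induction k) (auto simp: agree_mult, simp add: agree_def)

lemma agree_compose: "agree n a b \<Longrightarrow> agree n (F oo a) (F oo b)"
proof -
  assume h: "agree n a b"
  show ?thesis unfolding agree_def
  proof (intro allI impI)
    fix j assume "j < n"
    then show "fps_nth (F oo a) j = fps_nth (F oo b) j"
      using agree_power[OF h] unfolding fps_compose_nth agree_def by (auto intro!: sum.cong)
  qed
qed

lemma agree_shift:
  assumes v0: "fps_nth v 0 = 0" and h: "agree n a b"
  shows "agree (Suc n) (v * a) (v * b)"
  unfolding agree_def fps_mult_nth
proof (intro allI impI sum.cong refl)
  fix j i assume j: "j < Suc n" and i: "i \<in> {0..j}"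
  show "fps_nth v i * fps_nth a (j - i) = fps_nth v i * fps_nth b (j - i)"
  proof (cases "i = 0")
    case True then show ?thesis by (simp add: v0)
  next
    case False
    then have "j - i < n" using j i by auto
    then show ?thesis using h by (simp add: agree_def)
  qed
qed

lemma inverse_rel:
  fixes B T w v :: "'a::comm_ring_1 fps"
  assumes w0: "fps_nth w 0 = 0" and v0: "fps_nth v 0 = 0"
    and wU: "w * (1 - fps_X * T) = fps_X" and TB: "T = B oo w"
    and vU: "v * (1 + fps_X * B) = fps_X"
  shows "B = T oo v"
proof -
  define y where "y = w oo v"
  have y0: "fps_nth y 0 = 0" by (simp add: y_def w0)
  have Tv: "T oo v = B oo y" unfolding TB y_def by (rule my_compose_assoc[OF v0 w0, symmetric])
  have "(w * (1 - fps_X * T)) oo v = v" using wU v0 by simp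
  then have "y * (1 - v * (B oo y)) = v"
    by (simp add: my_compose_mult_distrib[OF v0] fps_compose_sub_distrib v0 Tv y_def[symmetric])
  then have Ey: "y = v + v * (y * (B oo y))" by (simp add: algebra_simps)
  have EX: "fps_X = v + v * (fps_X * (B oo fps_X))" using vU by (simp add: algebra_simps)
  have "agree n y fps_X" for n
  proof (induction n)
    case 0 then show ?case by (simp add: agree_def)
  next
    case (Suc n)
    have "agree n (y * (B oo y)) (fps_X * (B oo fps_X))"
      by (rule agree_mult[OF Suc agree_compose[OF Suc]])
    then have "agree (Suc n) (v * (y * (B oo y))) (v * (fps_X * (B oo fps_X)))"
      by (rule agree_shift[OF v0])
    then have "fps_nth y n = fps_nth fps_X n"
      by (subst Ey, subst EX) (simp add: agree_def)
    then show ?case using Suc by (auto simp: agree_def less_Suc_eq)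
  qed
  then have "y = fps_X" by (metis agree_def lessI fps_ext)
  then show ?thesis using Tv by simp
qed

theorem corollary5p2:
  fixes \<tau> :: "bpt \<Rightarrow> 'a::comm_ring_1"
  assumes "weighted_troupe \<tau>"
  shows "fps_algebraic (branch_gf \<tau>) \<longleftrightarrow> fps_algebraic (tree_gf \<tau>)"
proof -
  have t0: "\<tau> Leaf = 0" using assms by (simp add: weighted_troupe_def)
  define T where "T = tree_gf \<tau>"
  define B where "B = branch_gf \<tau>"
  have TT: "T = Abs_fps (tc \<tau>)" unfolding T_def by (rule tree_gf_eq[where t=\<tau>, OF t0])
  have B0: "fps_nth B 0 = 0" by (simp add: B_def branch_gf_def)
  define U1 where "U1 = 1 - fps_X * T"
  define w where "w = fps_X * fps_right_inverse U1 1"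
  have "U1 * fps_right_inverse U1 1 = 1" by (rule fps_right_inverse) (simp add: U1_def)
  moreover have "w * U1 = fps_X * (U1 * fps_right_inverse U1 1)" by (simp add: w_def mult_ac)
  ultimately have wU: "w * (1 - fps_X * T) = fps_X" by (simp add: U1_def)
  have w0: "fps_nth w 0 = 0" by (simp add: w_def)
  have TB: "T = B oo w" unfolding T_def B_def by (rule T_eq[OF assms]) (use wU TT in simp)
  define U2 where "U2 = 1 + fps_X * B"
  define v where "v = fps_X * fps_right_inverse U2 1"
  have "U2 * fps_right_inverse U2 1 = 1" by (rule fps_right_inverse) (simp add: U2_def)
  moreover have "v * U2 = fps_X * (U2 * fps_right_inverse U2 1)" by (simp add: v_def mult_ac)
  ultimately have vU: "v * (1 + fps_X * B) = fps_X" by (simp add: U2_def)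
  have v0: "fps_nth v 0 = 0" by (simp add: v_def)
  have BT: "B = T oo v" by (rule inverse_rel[OF w0 v0 wU TB vU])
  show ?thesis
  proof
    assume "fps_algebraic (branch_gf \<tau>)"
    then show "fps_algebraic (tree_gf \<tau>)"
      unfolding B_def[symmetric] T_def[symmetric]
      by (rule transfer_alg[OF _ w0 TB, of "-1"]) (use wU in \<open>simp add: fps_const_neg[symmetric] del: fps_const_neg\<close>)
  next
    assume "fps_algebraic (tree_gf \<tau>)"
    then show "fps_algebraic (branch_gf \<tau>)"
      unfolding B_def[symmetric] T_def[symmetric]
      by (rule transfer_alg[OF _ v0 BT, of 1]) (use vU in simp)
  qed
qed

end
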